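(* Let $\Pi_1,\Pi_2$ be hereditary class properties, $p$ a positive integer, and $f_1,f_2:\mathbb N\to\mathbb N$ non-decreasing functions. If a class $\mathscr C$ has an $f_i$-bounded $\Pi_i$-decomposition with parameter $p$ for $i=1,2$, then $\mathscr C$ has an $f_1f_2$-bounded $\Pi_1\cap\Pi_2$-decomposition with parameter $p$.
   Context: Graphs are finite and simple. A hereditary class is a class closed under isomorphism and induced subgraphs; a hereditary class property is a set $\Pi$ of hereditary classes such that $\mathscr C\in\Pi$, $\mathscr D$ hereditary, $\mathscr D\subseteq\mathscr C$ imply $\mathscr D\in\Pi$. For non-decreasing $f$ and positive integer $p$, $\mathscr C$ has an $f$-bounded $\Pi$-decomposition with parameter $p$ if there is $\mathscr D_p\in\Pi$ such that every $G\in\mathscr C$ has a partition $V_1,\dots,V_N$ of $V(G)$ with $N\le f(|G|)$ and $G[V_{i_1}\cup\dots\cup V_{i_p}]\in\mathscr D_p$ for all $i_1,\dots,i_p\in[N]$. *)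

theory Defs
  imports Main
begin

type_synonym 'a graph = "'a set \<times> 'a set set"

definition is_graph :: "'a graph \<Rightarrow> bool" where
  "is_graph G \<longleftrightarrow> finite (fst G) \<and> (\<forall>e\<in>snd G. e \<subseteq> fst G \<and> card e = 2)"

definition induced :: "'a graph \<Rightarrow> 'a set \<Rightarrow> 'a graph" where
  "induced G S = (S, {e \<in> snd G. e \<subseteq> S})"

definition graph_iso :: "'a graph \<Rightarrow> 'a graph \<Rightarrow> bool" where
  "graph_iso G H \<longleftrightarrow> (\<exists>f. bij_betw f (fst G) (fst H) \<and>
     (\<forall>x\<in>fst G. \<forall>y\<in>fst G. {x, y} \<in> snd G \<longleftrightarrow> {f x, f y} \<in> snd H))"

definition hereditary :: "'a graph set \<Rightarrow> bool" where
  "hereditary C \<longleftrightarrow> (\<forall>G\<in>C. is_graph G) \<and>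
     (\<forall>G\<in>C. \<forall>H. is_graph H \<and> graph_iso G H \<longrightarrow> H \<in> C) \<and>
     (\<forall>G\<in>C. \<forall>S. S \<subseteq> fst G \<longrightarrow> induced G S \<in> C)"

definition hereditary_property :: "'a graph set set \<Rightarrow> bool" where
  "hereditary_property \<Pi> \<longleftrightarrow> (\<forall>C\<in>\<Pi>. hereditary C) \<and>
     (\<forall>C\<in>\<Pi>. \<forall>D. hereditary D \<and> D \<subseteq> C \<longrightarrow> D \<in> \<Pi>)"

definition has_decomposition ::
  "(nat \<Rightarrow> nat) \<Rightarrow> 'a graph set set \<Rightarrow> nat \<Rightarrow> 'a graph set \<Rightarrow> bool" where
  "has_decomposition f \<Pi> p C \<longleftrightarrow> (\<exists>D\<in>\<Pi>. \<forall>G\<in>C. \<exists>N::nat. \<exists>V::nat \<Rightarrow> 'a set.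
      N \<le> f (card (fst G)) \<and>
      (\<Union>i\<in>{1..N}. V i) = fst G \<and>
      (\<forall>i\<in>{1..N}. \<forall>j\<in>{1..N}. i \<noteq> j \<longrightarrow> V i \<inter> V j = {}) \<and>
      (\<forall>\<iota>::nat \<Rightarrow> nat. (\<forall>k<p. \<iota> k \<in> {1..N}) \<longrightarrow>
          induced G (\<Union>k<p. V (\<iota> k)) \<in> D))"

end

theory Submission
  imports Defs
begin

lemma hered_inter:
  assumes "hereditary A" "hereditary B" shows "hereditary (A \<inter> B)"
proof -
  have a: "\<forall>G\<in>A. is_graph G" "\<forall>G\<in>A. \<forall>H. is_graph H \<and> graph_iso G H \<longrightarrow> H \<in> A"
     "\<forall>G\<in>A. \<forall>S. S \<subseteq> fst G \<longrightarrow> induced G S \<in> A" using assms(1) unfolding hereditary_def by auto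
  have b: "\<forall>G\<in>B. \<forall>H. is_graph H \<and> graph_iso G H \<longrightarrow> H \<in> B"
     "\<forall>G\<in>B. \<forall>S. S \<subseteq> fst G \<longrightarrow> induced G S \<in> B" using assms(2) unfolding hereditary_def by auto
  show ?thesis unfolding hereditary_def
  proof (intro conjI ballI allI impI)
    fix G assume "G \<in> A \<inter> B" then show "is_graph G" using a by simp
  next
    fix G H assume "G \<in> A \<inter> B" "is_graph H \<and> graph_iso G H" then show "H \<in> A \<inter> B" using a(2) b(1) by blast
  next
    fix G S assume "G \<in> A \<inter> B" "S \<subseteq> fst G" then show "induced G S \<in> A \<inter> B" using a(3) b(2) by blast
  qed
qed

definition okd :: "(nat \<Rightarrow> nat) \<Rightarrow> 'a graph set \<Rightarrow> nat \<Rightarrow> 'a graph \<Rightarrow> bool" where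
  "okd f D p G \<longleftrightarrow> (\<exists>N::nat. \<exists>V::nat \<Rightarrow> 'a set.
      N \<le> f (card (fst G)) \<and>
      (\<Union>i\<in>{1..N}. V i) = fst G \<and>
      (\<forall>i\<in>{1..N}. \<forall>j\<in>{1..N}. i \<noteq> j \<longrightarrow> V i \<inter> V j = {}) \<and>
      (\<forall>\<iota>::nat \<Rightarrow> nat. (\<forall>k<p. \<iota> k \<in> {1..N}) \<longrightarrow>
          induced G (\<Union>k<p. V (\<iota> k)) \<in> D))"
lemma hd_iff: "has_decomposition f P p C \<longleftrightarrow> (\<exists>D\<in>P. \<forall>G\<in>C. okd f D p G)"
  unfolding has_decomposition_def okd_def by (rule refl)

lemma hp_her: "hereditary_property P \<Longrightarrow> C \<in> P \<Longrightarrow> hereditary C"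
  unfolding hereditary_property_def by (elim conjE) (erule bspec)

lemma hp_sub: "hereditary_property P \<Longrightarrow> C \<in> P \<Longrightarrow> hereditary D \<Longrightarrow> D \<subseteq> C \<Longrightarrow> D \<in> P"
  unfolding hereditary_property_def by (elim conjE) (drule bspec, assumption, blast)

lemma induced_induced: "S \<subseteq> T \<Longrightarrow> induced (induced G T) S = induced G S"
  unfolding induced_def by auto

lemma hered_sub:
  assumes "hereditary D" "induced G T \<in> D" "S \<subseteq> T"
  shows "induced G S \<in> D"
proof -
  have "fst (induced G T) = T" by (simp add: induced_def)
  then have "induced (induced G T) S \<in> D" using assms unfolding hereditary_def by blast
  then show ?thesis using induced_induced[OF assms(3)] by simp
qed

lemma enc:
  fixes N2 :: nat
  assumes "a \<in> {1..N1}" "b \<in> {1..N2}"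
  shows "(a - 1) * N2 + b \<in> {1..N1 * N2}"
    "((a - 1) * N2 + b - 1) div N2 + 1 = a"
    "((a - 1) * N2 + b - 1) mod N2 + 1 = b"
proof -
  have b1: "b - 1 < N2" using assms by auto
  have e: "(a - 1) * N2 + b - 1 = (b - 1) + N2 * (a - 1)" using assms by (cases b) (auto simp: mult.commute)
  have "((b - 1) + N2 * (a - 1)) div N2 = a - 1" using b1 by simp
  then show "((a - 1) * N2 + b - 1) div N2 + 1 = a" unfolding e using assms by simp
  have m: "((b - 1) + N2 * (a - 1)) mod N2 = b - 1" using b1 by simp
  have "((a - 1) * N2 + b - 1) mod N2 + 1 = (b - 1) + 1" by (simp only: e m)
  then show "((a - 1) * N2 + b - 1) mod N2 + 1 = b" using assms by simp
  have "(a - 1) * N2 + b \<le> (a - 1) * N2 + N2" using assms by auto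
  also have "\<dots> = a * N2" using assms by (cases a) auto
  also have "\<dots> \<le> N1 * N2" using assms by auto
  finally show "(a - 1) * N2 + b \<in> {1..N1 * N2}" using assms by auto
qed

lemma dec:
  fixes N2 :: nat
  assumes "i \<in> {1..N1 * N2}"
  shows "(i - 1) div N2 + 1 \<in> {1..N1}" "(i - 1) mod N2 + 1 \<in> {1..N2}"
    "i = ((i - 1) div N2) * N2 + ((i - 1) mod N2) + 1"
proof -
  have N2: "N2 > 0" using assms by (cases N2) auto
  have "i - 1 < N1 * N2" using assms by auto
  then have "(i - 1) div N2 < N1" using N2 by (simp add: div_less_iff_less_mult)
  then show "(i - 1) div N2 + 1 \<in> {1..N1}" by auto
  show "(i - 1) mod N2 + 1 \<in> {1..N2}" using N2 by (simp add: Suc_leI)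
  show "i = ((i - 1) div N2) * N2 + ((i - 1) mod N2) + 1" using assms by simp
qed

theorem mainTheorem9:
  fixes \<Pi>1 \<Pi>2 :: "'a graph set set" and C :: "'a graph set"
    and f1 f2 :: "nat \<Rightarrow> nat" and p :: nat
  assumes "hereditary_property \<Pi>1" and "hereditary_property \<Pi>2"
    and "p > 0" and "mono f1" and "mono f2"
    and "has_decomposition f1 \<Pi>1 p C" and "has_decomposition f2 \<Pi>2 p C"
  shows "has_decomposition (\<lambda>n. f1 n * f2 n) (\<Pi>1 \<inter> \<Pi>2) p C"
proof -
  obtain D1 where D1: "D1 \<in> \<Pi>1" and H1: "\<forall>G\<in>C. okd f1 D1 p G"
    using assms(6) unfolding hd_iff by (elim bexE)
  obtain D2 where D2: "D2 \<in> \<Pi>2" and H2: "\<forall>G\<in>C. okd f2 D2 p G"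
    using assms(7) unfolding hd_iff by (elim bexE)
  have hD1: "hereditary D1" using hp_her[OF assms(1) D1] .
  have hD2: "hereditary D2" using hp_her[OF assms(2) D2] .
  have hD: "hereditary (D1 \<inter> D2)" using hered_inter[OF hD1 hD2] .
  have "D1 \<inter> D2 \<in> \<Pi>1" using hp_sub[OF assms(1) D1 hD] by blast
  moreover have "D1 \<inter> D2 \<in> \<Pi>2" using hp_sub[OF assms(2) D2 hD] by blast
  moreover have "\<forall>G\<in>C. okd (\<lambda>n. f1 n * f2 n) (D1 \<inter> D2) p G"
  proof
    fix G assume G: "G \<in> C"
    have "okd f1 D1 p G" using H1 G by blast
    then obtain N1 V1 where n1: "N1 \<le> f1 (card (fst G))" and u1: "(\<Union>i\<in>{1..N1}. V1 i) = fst G"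
      and d1: "\<forall>i\<in>{1..N1}. \<forall>j\<in>{1..N1}. i \<noteq> j \<longrightarrow> V1 i \<inter> V1 j = {}"
      and i1: "\<forall>\<iota>::nat \<Rightarrow> nat. (\<forall>k<p. \<iota> k \<in> {1..N1}) \<longrightarrow>
          induced G (\<Union>k<p. V1 (\<iota> k)) \<in> D1"
      unfolding okd_def by (elim exE conjE) (rule that; assumption)
    have "okd f2 D2 p G" using H2 G by blast
    then obtain N2 V2 where n2: "N2 \<le> f2 (card (fst G))" and u2: "(\<Union>i\<in>{1..N2}. V2 i) = fst G"
      and d2: "\<forall>i\<in>{1..N2}. \<forall>j\<in>{1..N2}. i \<noteq> j \<longrightarrow> V2 i \<inter> V2 j = {}"
      and i2: "\<forall>\<iota>::nat \<Rightarrow> nat. (\<forall>k<p. \<iota> k \<in> {1..N2}) \<longrightarrow>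
          induced G (\<Union>k<p. V2 (\<iota> k)) \<in> D2"
      unfolding okd_def by (elim exE conjE) (rule that; assumption)
    define A where "A i = (i - 1) div N2 + 1" for i
    define B where "B i = (i - 1) mod N2 + 1" for i
    define W where "W i = V1 (A i) \<inter> V2 (B i)" for i
    have AB: "A i \<in> {1..N1}" "B i \<in> {1..N2}" if "i \<in> {1..N1*N2}" for i
      using dec[OF that] unfolding A_def B_def by auto
    have "N1 * N2 \<le> f1 (card (fst G)) * f2 (card (fst G))" using n1 n2 by (simp add: mult_le_mono)
    moreover have "(\<Union>i\<in>{1..N1*N2}. W i) = fst G"
    proof
      show "(\<Union>i\<in>{1..N1*N2}. W i) \<subseteq> fst G" using AB u1 unfolding W_def by blast
      show "fst G \<subseteq> (\<Union>i\<in>{1..N1*N2}. W i)"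
      proof
        fix x assume x: "x \<in> fst G"
        obtain a where a: "a \<in> {1..N1}" "x \<in> V1 a" using x u1 by blast
        obtain b where b: "b \<in> {1..N2}" "x \<in> V2 b" using x u2 by blast
        note e = enc[OF a(1) b(1)]
        have "x \<in> W ((a - 1) * N2 + b)" unfolding W_def A_def B_def e(2,3) using a b by simp
        then show "x \<in> (\<Union>i\<in>{1..N1*N2}. W i)" using e(1) by blast
      qed
    qed
    moreover have "\<forall>i\<in>{1..N1*N2}. \<forall>j\<in>{1..N1*N2}. i \<noteq> j \<longrightarrow> W i \<inter> W j = {}"
    proof (intro ballI impI)
      fix i j assume i: "i \<in> {1..N1*N2}" and j: "j \<in> {1..N1*N2}" and ij: "i \<noteq> j"
      have "A i \<noteq> A j \<or> B i \<noteq> B j"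
      proof (rule ccontr)
        assume "\<not> (A i \<noteq> A j \<or> B i \<noteq> B j)"
        then have "(i - 1) div N2 = (j - 1) div N2" "(i - 1) mod N2 = (j - 1) mod N2"
          unfolding A_def B_def by auto
        then have "i = j" using dec(3)[OF i] dec(3)[OF j] by simp
        then show False using ij by simp
      qed
      then show "W i \<inter> W j = {}" using d1 d2 AB[OF i] AB[OF j] unfolding W_def by blast
    qed
    moreover have "\<forall>\<iota>::nat \<Rightarrow> nat. (\<forall>k<p. \<iota> k \<in> {1..N1*N2}) \<longrightarrow>
          induced G (\<Union>k<p. W (\<iota> k)) \<in> D1 \<inter> D2"
    proof (intro allI impI)
      fix \<iota> :: "nat \<Rightarrow> nat" assume r: "\<forall>k<p. \<iota> k \<in> {1..N1*N2}"
      have "\<forall>k<p. (A \<circ> \<iota>) k \<in> {1..N1}" using r AB by simp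
      then have "induced G (\<Union>k<p. V1 ((A \<circ> \<iota>) k)) \<in> D1" using i1 by blast
      moreover have "(\<Union>k<p. W (\<iota> k)) \<subseteq> (\<Union>k<p. V1 ((A \<circ> \<iota>) k))" unfolding W_def by auto
      ultimately have 1: "induced G (\<Union>k<p. W (\<iota> k)) \<in> D1" using hered_sub[OF hD1] by blast
      have "\<forall>k<p. (B \<circ> \<iota>) k \<in> {1..N2}" using r AB by simp
      then have "induced G (\<Union>k<p. V2 ((B \<circ> \<iota>) k)) \<in> D2" using i2 by blast
      moreover have "(\<Union>k<p. W (\<iota> k)) \<subseteq> (\<Union>k<p. V2 ((B \<circ> \<iota>) k))" unfolding W_def by auto
      ultimately have 2: "induced G (\<Union>k<p. W (\<iota> k)) \<in> D2" using hered_sub[OF hD2] by blast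
      show "induced G (\<Union>k<p. W (\<iota> k)) \<in> D1 \<inter> D2" using 1 2 by blast
    qed
    ultimately show "okd (\<lambda>n. f1 n * f2 n) (D1 \<inter> D2) p G" unfolding okd_def
      by (intro exI[of _ "N1*N2"] exI[of _ W] conjI) simp_all
  qed
  ultimately show ?thesis unfolding hd_iff by blast
qed

end
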